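(* Let $n,m\in\mathbb{Z}$. For $x\in\mathbb{R}$, $y>0$, $k\in\mathbb{Z}$ and $y_0>0$ let \[ p_k(x,y)=\frac{1}{\pi}\frac{y}{(x-2\pi k)^2+y^2},\quad h(x,y)=\frac{1}{2\pi}\frac{\sinh y}{\cosh y-\cos x},\quad G(x,y)=\frac{1}{2\pi}\log\frac{x^2+(y+y_0)^2}{x^2+(y-y_0)^2}, \] and let \[ j(x,y)= h^{-1}\, H\nabla p_m\cdot\nabla p_n + p_n\, H\nabla p_m\cdot\nabla h^{-1} - p_m\, H\nabla p_n\cdot\nabla h^{-1}, \] all functions evaluated at $(x,y)$. Then one can take the limit as $y_0\to\infty$ under the integral sign in \[ \int_{-\infty}^\infty\int_0^\infty \frac{G(x,y)}{p_n(0,y_0)}\, j(x,y)\,dy\,dx; \] that is, these integrals are well defined for all sufficiently large $y_0$, the integral $\int_{-\infty}^\infty\int_0^\infty 2y\, j(x,y)\,dy\,dx$ is well defined, and \[ \lim_{y_0\to\infty}\int_{-\infty}^\infty\int_0^\infty \frac{G(x,y)}{p_n(0,y_0)}\, j(x,y)\,dy\,dx=\int_{-\infty}^\infty\int_0^\infty 2y\, j(x,y)\,dy\,dx. \]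
   Context: $\nabla=(\partial_x,\partial_y)$; $H$ is the matrix $\begin{pmatrix}0&-1\\1&0\end{pmatrix}$, so $H\nabla f=(-\partial_y f,\partial_x f)$; $h^{-1}$ denotes the function $1/h$; the dot denotes the Euclidean inner product in $\mathbb{R}^2$. Note $\lim_{y_0\to\infty}G(x,y)/p_n(0,y_0)=2y$ pointwise. *)

theory Defs
  imports "HOL-Analysis.Analysis"
begin

definition pk :: "int \<Rightarrow> real \<Rightarrow> real \<Rightarrow> real" where
  "pk k x y = (1 / pi) * (y / ((x - 2 * pi * of_int k)^2 + y^2))"

definition hh :: "real \<Rightarrow> real \<Rightarrow> real" where
  "hh x y = (1 / (2 * pi)) * (sinh y / (cosh y - cos x))"

definition hinv :: "real \<Rightarrow> real \<Rightarrow> real" where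
  "hinv x y = 1 / hh x y"

definition GG :: "real \<Rightarrow> real \<Rightarrow> real \<Rightarrow> real" where
  "GG y0 x y = (1 / (2 * pi)) * ln ((x^2 + (y + y0)^2) / (x^2 + (y - y0)^2))"

definition pdx :: "(real \<Rightarrow> real \<Rightarrow> real) \<Rightarrow> real \<Rightarrow> real \<Rightarrow> real" where
  "pdx f x y = deriv (\<lambda>t. f t y) x"

definition pdy :: "(real \<Rightarrow> real \<Rightarrow> real) \<Rightarrow> real \<Rightarrow> real \<Rightarrow> real" where
  "pdy f x y = deriv (\<lambda>t. f x t) y"

text \<open>H\<nabla>f \<cdot> \<nabla>g with H\<nabla>f = (-\<partial>_y f, \<partial>_x f).\<close>
definition Hgrad_dot :: "(real \<Rightarrow> real \<Rightarrow> real) \<Rightarrow> (real \<Rightarrow> real \<Rightarrow> real) \<Rightarrow> real \<Rightarrow> real \<Rightarrow> real" where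
  "Hgrad_dot f g x y = (- pdy f x y) * pdx g x y + pdx f x y * pdy g x y"

definition jj :: "int \<Rightarrow> int \<Rightarrow> real \<Rightarrow> real \<Rightarrow> real" where
  "jj m n x y = hinv x y * Hgrad_dot (pk m) (pk n) x y
              + pk n x y * Hgrad_dot (pk m) hinv x y
              - pk m x y * Hgrad_dot (pk n) hinv x y"

definition upper_half :: "(real \<times> real) set" where
  "upper_half = {z. snd z > 0}"

end

theory Submission
  imports Defs "HOL-Real_Asymp.Real_Asymp"
begin
definition px :: "real \<Rightarrow> real \<Rightarrow> real \<Rightarrow> real" where
  "px a x y = - (2 * (x - a) * y) / (pi * ((x - a)^2 + y^2)^2)"
definition py :: "real \<Rightarrow> real \<Rightarrow> real \<Rightarrow> real" where
  "py a x y = ((x - a)^2 - y^2) / (pi * ((x - a)^2 + y^2)^2)"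
definition pp :: "real \<Rightarrow> real \<Rightarrow> real \<Rightarrow> real" where
  "pp a x y = y / (pi * ((x - a)^2 + y^2))"
definition HH :: "real \<Rightarrow> real \<Rightarrow> real" where
  "HH x y = 2 * pi * (cosh y - cos x) / sinh y"
definition Hx :: "real \<Rightarrow> real \<Rightarrow> real" where
  "Hx x y = 2 * pi * sin x / sinh y"
definition Hy :: "real \<Rightarrow> real \<Rightarrow> real" where
  "Hy x y = 2 * pi * (cos x * cosh y - 1) / (sinh y)^2"
definition JJ :: "real \<Rightarrow> real \<Rightarrow> real \<Rightarrow> real \<Rightarrow> real" where
  "JJ a b x y = HH x y * (- py a x y * px b x y + px a x y * py b x y)
     + pp b x y * (- py a x y * Hx x y + px a x y * Hy x y)
     - pp a x y * (- py b x y * Hx x y + px b x y * Hy x y)"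

lemma pk_eq: "pk k x y = pp (2 * pi * of_int k) x y"
  by (simp add: pk_def pp_def)

lemma hinv_eq: "hinv x y = HH x y"
  by (simp add: hinv_def hh_def HH_def)

lemma pp_dx: assumes "y \<noteq> 0" shows "((\<lambda>t. pp a t y) has_real_derivative px a x y) (at x)"
proof -
  define d where "d = (x - a)^2 + y^2"
  have nz: "d \<noteq> 0" using assms by (simp add: d_def add_nonneg_eq_0_iff)
  have "((\<lambda>t. y / (pi * ((t - a)^2 + y^2))) has_real_derivative
          - (y * (pi * (2 * (x - a)))) / (pi * ((x - a)^2 + y^2))^2) (at x)"
    using nz unfolding d_def by (auto intro!: derivative_eq_intros simp: power2_eq_square)
  moreover have "- (y * (pi * (2 * (x - a)))) / (pi * ((x - a)^2 + y^2))^2 = px a x y"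
    unfolding px_def d_def[symmetric] using nz by (simp add: field_simps power2_eq_square)
  ultimately show ?thesis unfolding pp_def by simp
qed

lemma pp_dy: assumes "y \<noteq> 0" shows "((\<lambda>t. pp a x t) has_real_derivative py a x y) (at y)"
proof -
  define d where "d = (x - a)^2 + y^2"
  have nz: "d \<noteq> 0" using assms by (simp add: d_def add_nonneg_eq_0_iff)
  have "((\<lambda>t. t / (pi * ((x - a)^2 + t^2))) has_real_derivative
          (pi * ((x - a)^2 + y^2) - y * (pi * (2 * y))) / (pi * ((x - a)^2 + y^2))^2) (at y)"
    using nz unfolding d_def by (auto intro!: derivative_eq_intros simp: power2_eq_square)
  moreover have "(pi * ((x - a)^2 + y^2) - y * (pi * (2 * y))) / (pi * ((x - a)^2 + y^2))^2 = py a x y"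
  proof -
    have e1: "pi * ((x - a)^2 + y^2) - y * (pi * (2 * y)) = pi * ((x - a)^2 - y^2)"
      by (simp add: algebra_simps power2_eq_square)
    have e2: "(pi * ((x - a)^2 + y^2))^2 = pi * (pi * d^2)" by (simp add: d_def power2_eq_square)
    have "(pi * ((x - a)^2 + y^2) - y * (pi * (2 * y))) / (pi * ((x - a)^2 + y^2))^2
        = pi * ((x - a)^2 - y^2) / (pi * (pi * d^2))" by (simp only: e1 e2)
    also have "\<dots> = ((x - a)^2 - y^2) / (pi * d^2)" by simp
    also have "\<dots> = py a x y" by (simp add: py_def d_def)
    finally show ?thesis .
  qed
  ultimately show ?thesis unfolding pp_def by simp
qed

lemma pk_dx: assumes "y \<noteq> 0" shows "pdx (pk k) x y = px (2 * pi * of_int k) x y"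
  unfolding pdx_def pk_eq by (rule DERIV_imp_deriv[OF pp_dx[OF assms]])

lemma pk_dy: assumes "y \<noteq> 0" shows "pdy (pk k) x y = py (2 * pi * of_int k) x y"
  unfolding pdy_def pk_eq by (rule DERIV_imp_deriv[OF pp_dy[OF assms]])

lemma hinv_dx: assumes "y \<noteq> 0" shows "pdx hinv x y = Hx x y"
proof -
  have "((\<lambda>t. hinv t y) has_real_derivative Hx x y) (at x)"
    unfolding hinv_eq HH_def Hx_def using assms
    by (auto intro!: derivative_eq_intros)
  then show ?thesis unfolding pdx_def by (rule DERIV_imp_deriv)
qed

lemma hinv_dy: assumes "y \<noteq> 0" shows "pdy hinv x y = Hy x y"
proof -
  have nz: "sinh y \<noteq> 0" using assms by simp
  have "((\<lambda>t. hinv x t) has_real_derivative Hy x y) (at y)"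
    unfolding hinv_eq HH_def Hy_def
    using nz apply (auto intro!: derivative_eq_intros simp: field_simps power2_eq_square)
    using cosh_square_eq[of y] unfolding power2_eq_square by algebra
  then show ?thesis unfolding pdy_def by (rule DERIV_imp_deriv)
qed

lemma jj_eq: assumes "y \<noteq> 0"
  shows "jj m n x y = JJ (2 * pi * of_int m) (2 * pi * of_int n) x y"
  unfolding jj_def JJ_def Hgrad_dot_def
  by (simp add: pk_dx pk_dy hinv_dx hinv_dy assms pk_eq hinv_eq)

lemma jj_same: "jj m m x y = 0"
  unfolding jj_def Hgrad_dot_def by (simp add: algebra_simps)

lemma sinh_ge_self: assumes "0 \<le> (y::real)" shows "y \<le> sinh y"
proof -
  have "sinh 0 - 0 \<le> sinh y - y"
  proof (rule DERIV_nonneg_imp_nondecreasing[OF assms])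
    fix t :: real
    have "((\<lambda>t. sinh t - t) has_real_derivative (cosh t - 1)) (at t)"
      by (rule derivative_eq_intros refl)+ simp
    then show "\<exists>d. ((\<lambda>t. sinh t - t) has_real_derivative d) (at t) \<and> 0 \<le> d"
      using cosh_real_ge_1[of t] by auto
  qed
  then show ?thesis by simp
qed

lemma cosh_ge_sq: assumes "0 \<le> (y::real)" shows "y^2 / 2 \<le> cosh y - 1"
proof -
  have "cosh 0 - 0^2/2 \<le> cosh y - y^2/2"
  proof (rule DERIV_nonneg_imp_nondecreasing[OF assms])
    fix t :: real assume t: "0 \<le> t"
    have "((\<lambda>t. cosh t - t^2/2) has_real_derivative (sinh t - t)) (at t)"
      by (auto intro!: derivative_eq_intros)
    then show "\<exists>d. ((\<lambda>t. cosh t - t^2/2) has_real_derivative d) (at t) \<and> 0 \<le> d"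
      using sinh_ge_self[OF t] by auto
  qed
  then show ?thesis by simp
qed

lemma cosh_le_ysinh: assumes "0 \<le> (y::real)" shows "cosh y - 1 \<le> y * sinh y"
proof -
  have "0 * sinh 0 - cosh 0 \<le> y * sinh y - cosh y"
  proof (rule DERIV_nonneg_imp_nondecreasing[OF assms])
    fix t :: real assume t: "0 \<le> t"
    have "((\<lambda>t. t * sinh t - cosh t) has_real_derivative (t * cosh t)) (at t)"
      by (rule derivative_eq_intros refl)+ simp
    then show "\<exists>d. ((\<lambda>t. t * sinh t - cosh t) has_real_derivative d) (at t) \<and> 0 \<le> d"
      using t by auto
  qed
  then show ?thesis by simp
qed

lemma cosh_le_sinh1: assumes "0 \<le> (y::real)" shows "cosh y \<le> sinh y + 1"
proof -
  have "cosh y - sinh y = exp (- y)" by (rule cosh_minus_sinh)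
  moreover have "exp (- y) \<le> 1" using assms by simp
  ultimately show ?thesis by linarith
qed

lemma one_minus_cos_le: "1 - cos (u::real) \<le> u^2 / 2"
proof -
  have "0^2/2 + cos 0 \<le> \<bar>u\<bar>^2/2 + cos \<bar>u\<bar>"
  proof (rule DERIV_nonneg_imp_nondecreasing[of 0 "\<bar>u\<bar>"])
    fix t :: real assume t: "0 \<le> t"
    have "((\<lambda>t. t^2/2 + cos t) has_real_derivative (t - sin t)) (at t)"
      by (auto intro!: derivative_eq_intros)
    then show "\<exists>d. ((\<lambda>t. t^2/2 + cos t) has_real_derivative d) (at t) \<and> 0 \<le> d"
      using sin_x_le_x[OF t] by auto
  qed simp
  then show ?thesis by simp
qed

lemma yH_le1: assumes y: "0 < y" shows "y * HH x y \<le> 2 * pi * (y + 2)"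
proof -
  have s: "y \<le> sinh y" "0 < sinh y" using sinh_ge_self[of y] y by auto
  have c: "cosh y \<le> sinh y + 1" using cosh_le_sinh1[of y] y by simp
  have "y * (cosh y - cos x) \<le> y * (sinh y + 2)"
    using c y by (intro mult_left_mono) (auto simp: cos_ge_minus_one, smt (verit) cos_ge_minus_one)
  also have "\<dots> \<le> (y + 2) * sinh y" using s by (simp add: algebra_simps)
  finally have "y * (cosh y - cos x) / sinh y \<le> y + 2" using s by (simp add: divide_le_eq)
  then show ?thesis unfolding HH_def using pi_gt_zero
    by (smt (verit) mult_left_mono times_divide_eq_right mult.assoc mult.left_commute)
qed

lemma cos_shift: assumes "cos (a::real) = 1" shows "cos x = cos (x - a)" "sin x = sin (x - a)"
proof -
  have sa: "sin a = 0" using assms sin_cos_squared_add[of a] by (simp add: power2_eq_square)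
  show "cos x = cos (x - a)" "sin x = sin (x - a)" using assms sa by (simp_all add: cos_diff sin_diff)
qed

lemma yH_le2: assumes y: "0 < y" and a: "cos a = 1"
  shows "y * HH x y \<le> 2 * pi * ((x - a)^2 + y^2)"
proof -
  have s: "y \<le> sinh y" "0 < sinh y" using sinh_ge_self[of y] y by auto
  have c1: "cosh y - 1 \<le> y * sinh y" using cosh_le_ysinh[of y] y by simp
  have c2: "1 - cos x \<le> (x - a)^2 / 2" using one_minus_cos_le[of "x - a"] cos_shift[OF a] by simp
  have "y * (cosh y - cos x) = y * (cosh y - 1) + y * (1 - cos x)" by (simp add: algebra_simps)
  also have "\<dots> \<le> y * (y * sinh y) + sinh y * ((x - a)^2 / 2)"
    using c1 c2 y s cosh_real_ge_1[of y] by (intro add_mono mult_mono) (auto simp: one_minus_cos_le)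
  also have "\<dots> \<le> sinh y * ((x - a)^2 + y^2)"
  proof -
    have h1: "y * (y * sinh y) = sinh y * y^2" by (simp add: power2_eq_square)
    have h2: "sinh y * ((x - a)^2 / 2) \<le> sinh y * (x - a)^2" using s by (intro mult_left_mono) auto
    have h3: "sinh y * ((x - a)^2 + y^2) = sinh y * (x - a)^2 + sinh y * y^2" by (simp add: distrib_left)
    show ?thesis using h1 h2 h3 by linarith
  qed
  finally have "y * (cosh y - cos x) / sinh y \<le> (x - a)^2 + y^2" using s by (simp add: divide_le_eq mult.commute)
  then show ?thesis unfolding HH_def using pi_gt_zero
    by (smt (verit) mult_left_mono times_divide_eq_right mult.assoc mult.left_commute)
qed

lemma HH_nonneg: assumes "0 < y" shows "0 \<le> HH x y"
proof -
  have "0 \<le> cosh y - cos x" using cosh_real_ge_1[of y] cos_le_one[of x] by linarith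
  then show ?thesis unfolding HH_def using assms by (auto intro!: divide_nonneg_pos)
qed

lemma Q_le1: assumes y: "0 < (y::real)" shows "y^2 * \<bar>cos x * cosh y - 1\<bar> \<le> 2 * (sinh y)^2"
proof -
  have c: "y^2 / 2 \<le> cosh y - 1" using cosh_ge_sq[of y] y by simp
  have ss: "(sinh y)^2 = (cosh y - 1) * (cosh y + 1)" by (subst sinh_square_eq) (simp add: power2_eq_square algebra_simps)
  have "\<bar>cos x * cosh y - 1\<bar> \<le> cosh y + 1"
    using cos_le_one[of x] cos_ge_minus_one[of x] cosh_real_ge_1[of y]
    by (smt (verit) mult_left_le_one_le mult_nonneg_nonneg mult_le_cancel_right1 abs_le_iff mult_minus_left)
  then have "y^2 * \<bar>cos x * cosh y - 1\<bar> \<le> y^2 * (cosh y + 1)" by (simp add: mult_left_mono)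
  also have "\<dots> \<le> 2 * (cosh y - 1) * (cosh y + 1)" using c cosh_real_ge_1[of y]
    by (intro mult_right_mono) auto
  finally have "y^2 * \<bar>cos x * cosh y - 1\<bar> \<le> 2 * (cosh y - 1) * (cosh y + 1)" .
  then show ?thesis unfolding ss by (simp only: mult.assoc)
qed

lemma Q_le2: assumes y: "0 < (y::real)" and a: "cos a = 1"
  shows "y^2 * \<bar>cos x * cosh y - 1\<bar> \<le> (sinh y)^2 * ((x - a)^2 + y^2)"
proof -
  have c: "y^2 / 2 \<le> cosh y - 1" using cosh_ge_sq[of y] y by simp
  have c1: "1 \<le> cosh y" by (rule cosh_real_ge_1)
  have ss: "(sinh y)^2 = (cosh y - 1) * (cosh y + 1)" by (subst sinh_square_eq) (simp add: power2_eq_square algebra_simps)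
  have cx: "1 - cos x \<le> (x - a)^2 / 2" "0 \<le> 1 - cos x" using one_minus_cos_le[of "x - a"] cos_shift[OF a] cos_le_one[of x] by auto
  have "cos x * cosh y - 1 = (cosh y - 1) - cosh y * (1 - cos x)" by (simp add: algebra_simps)
  then have "\<bar>cos x * cosh y - 1\<bar> \<le> (cosh y - 1) + cosh y * (1 - cos x)"
    using c1 cx by (smt (verit) mult_nonneg_nonneg)
  also have "\<dots> \<le> (cosh y - 1) + cosh y * ((x - a)^2 / 2)"
    using cx c1 by (intro add_left_mono mult_left_mono) auto
  finally have "y^2 * \<bar>cos x * cosh y - 1\<bar> \<le> y^2 * (cosh y - 1) + (y^2 * cosh y) * ((x - a)^2 / 2)"
    by (smt (verit) distrib_left mult.assoc mult_left_mono zero_le_power2)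
  also have "\<dots> \<le> (sinh y)^2 * y^2 + (2 * (sinh y)^2) * ((x - a)^2 / 2)"
  proof (intro add_mono mult_right_mono)
    have "(cosh y - 1) * 1 \<le> (cosh y - 1) * (cosh y + 1)" using c1 by (intro mult_left_mono) auto
    then have "y^2 * ((cosh y - 1) * 1) \<le> y^2 * ((cosh y - 1) * (cosh y + 1))" by (rule mult_left_mono) auto
    then show "y^2 * (cosh y - 1) \<le> (sinh y)^2 * y^2" unfolding ss using c1 by (simp add: mult.commute)
    have "y^2 * cosh y \<le> 2 * (cosh y - 1) * cosh y" using c c1 by (intro mult_right_mono) auto
    also have "\<dots> \<le> 2 * (cosh y - 1) * (cosh y + 1)" using c1 by (intro mult_left_mono) auto
    finally show "y^2 * cosh y \<le> 2 * (sinh y)^2" unfolding ss by (simp only: mult.assoc)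
  qed auto
  also have "\<dots> = (sinh y)^2 * ((x - a)^2 + y^2)" by (simp add: algebra_simps)
  finally show ?thesis .
qed

lemma D_pos: "0 < (y::real) \<Longrightarrow> 0 < (x - a)^2 + y^2"
  by (simp add: add_nonneg_pos)

lemma uy_le: "2 * \<bar>x - a\<bar> * (y::real) \<le> (x - a)^2 + y^2" if "0 \<le> y"
proof -
  have "0 \<le> (\<bar>x - a\<bar> - y)^2" by simp
  then show ?thesis using that by (simp add: power2_eq_square algebra_simps abs_mult_self_eq)
qed

lemma py_abs: assumes "0 < y" shows "\<bar>py a x y\<bar> \<le> 1 / (pi * ((x - a)^2 + y^2))"
proof -
  define D where "D = (x - a)^2 + y^2"
  have D: "0 < D" using D_pos[OF assms] by (simp add: D_def)
  have "\<bar>(x - a)^2 - y^2\<bar> \<le> D" by (simp add: D_def abs_le_iff)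
  then have "\<bar>py a x y\<bar> \<le> D / (pi * D^2)" unfolding py_def D_def[symmetric]
    using D by (simp add: abs_divide abs_mult divide_right_mono)
  also have "\<dots> = 1 / (pi * D)" using D by (simp add: power2_eq_square)
  finally show ?thesis by (simp add: D_def)
qed

lemma px_abs: assumes "0 < y" shows "\<bar>px a x y\<bar> = 2 * \<bar>x - a\<bar> * y / (pi * ((x - a)^2 + y^2)^2)"
  unfolding px_def abs_divide abs_minus_cancel abs_mult using assms by simp

lemma px_abs_le: assumes "0 < y" shows "\<bar>px a x y\<bar> \<le> 1 / (pi * ((x - a)^2 + y^2))"
proof -
  define D where "D = (x - a)^2 + y^2"
  have D: "0 < D" using D_pos[OF assms] by (simp add: D_def)
  have "\<bar>px a x y\<bar> \<le> D / (pi * D^2)" unfolding px_abs[OF assms] D_def[symmetric]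
    using uy_le[of y x a] assms D by (intro divide_right_mono) (auto simp: D_def)
  also have "\<dots> = 1 / (pi * D)" using D by (simp add: power2_eq_square)
  finally show ?thesis by (simp add: D_def)
qed

lemma pp_abs: assumes "0 < y" shows "\<bar>pp a x y\<bar> = y / (pi * ((x - a)^2 + y^2))"
  unfolding pp_def using assms by (simp add: abs_divide abs_mult)

lemma piece1:
  fixes x y a b :: real
  assumes y: "0 < y" and ca: "cos a = 1" and cb: "cos b = 1"
  defines "Da \<equiv> (x - a)^2 + y^2" and "Db \<equiv> (x - b)^2 + y^2"
  shows "y * \<bar>HH x y * py a x y * px b x y\<bar> \<le> 2 * (1 + y) / (Da * Db)
       \<and> y * \<bar>HH x y * py a x y * px b x y\<bar> \<le> 2 / Da
       \<and> y * \<bar>HH x y * py a x y * px b x y\<bar> \<le> 2 / Db"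
proof -
  have Da: "0 < Da" and Db: "0 < Db" using D_pos[OF y] by (auto simp: Da_def Db_def)
  define t where "t = y * HH x y"
  have t0: "0 \<le> t" using HH_nonneg[OF y] y by (simp add: t_def)
  have P: "\<bar>py a x y\<bar> \<le> 1 / (pi * Da)" using py_abs[OF y] by (simp add: Da_def)
  have R: "\<bar>px b x y\<bar> \<le> 1 / (pi * Db)" using px_abs_le[OF y] by (simp add: Db_def)
  have "y * \<bar>HH x y * py a x y * px b x y\<bar> = t * \<bar>py a x y\<bar> * \<bar>px b x y\<bar>"
    using y HH_nonneg[OF y] by (simp add: t_def abs_mult)
  also have "\<dots> \<le> t * (1 / (pi * Da)) * (1 / (pi * Db))"
    using P R t0 Da by (intro mult_mono) auto
  also have "\<dots> = t / (pi^2 * Da * Db)" by (simp add: power2_eq_square)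
  finally have X: "y * \<bar>HH x y * py a x y * px b x y\<bar> \<le> t / (pi^2 * Da * Db)" .
  have pp: "0 < pi^2 * Da * Db" using Da Db by simp
  have t1: "t \<le> 2 * pi * (y + 2)" using yH_le1[OF y] by (simp add: t_def)
  have t2: "t \<le> 2 * pi * Da" using yH_le2[OF y ca] by (simp add: t_def Da_def)
  have t3: "t \<le> 2 * pi * Db" using yH_le2[OF y cb] by (simp add: t_def Db_def)
  have "t / (pi^2 * Da * Db) \<le> 2 * pi * (y + 2) / (pi^2 * Da * Db)"
    using t1 pp by (intro divide_right_mono) auto
  also have "\<dots> = (2 * (y + 2) / pi) / (Da * Db)" by (simp add: power2_eq_square)
  also have "\<dots> \<le> 2 * (1 + y) / (Da * Db)"
  proof (intro divide_right_mono)
    have "2 * (1 + y) * 3 \<le> 2 * (1 + y) * pi" using pi_gt3 y by (intro mult_left_mono) auto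
    then have "2 * (y + 2) \<le> 2 * (1 + y) * pi" using y by (smt (verit))
    then show "2 * (y + 2) / pi \<le> 2 * (1 + y)" by (simp add: divide_le_eq)
  qed (use Da Db in auto)
  finally have A1: "t / (pi^2 * Da * Db) \<le> 2 * (1 + y) / (Da * Db)" .
  have "t / (pi^2 * Da * Db) \<le> 2 * pi * Da / (pi^2 * Da * Db)"
    using t2 pp by (intro divide_right_mono) auto
  also have "\<dots> = (2 / pi) / Db" using Da by (simp add: power2_eq_square)
  also have "\<dots> \<le> 2 / Db" using Db pi_gt3 by (intro divide_right_mono) (auto simp: divide_le_eq)
  finally have A2: "t / (pi^2 * Da * Db) \<le> 2 / Db" .
  have "t / (pi^2 * Da * Db) \<le> 2 * pi * Db / (pi^2 * Da * Db)"
    using t3 pp by (intro divide_right_mono) auto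
  also have "\<dots> = (2 / pi) / Da" using Db by (simp add: power2_eq_square)
  also have "\<dots> \<le> 2 / Da" using Da pi_gt3 by (intro divide_right_mono) (auto simp: divide_le_eq)
  finally have A3: "t / (pi^2 * Da * Db) \<le> 2 / Da" .
  show ?thesis using X A1 A2 A3 by linarith
qed

lemma piece3:
  fixes x y a b :: real
  assumes y: "0 < y" and ca: "cos a = 1" and cb: "cos b = 1"
  defines "Da \<equiv> (x - a)^2 + y^2" and "Db \<equiv> (x - b)^2 + y^2"
  shows "y * \<bar>pp b x y * py a x y * Hx x y\<bar> \<le> 2 * (1 + y) / (Da * Db)
       \<and> y * \<bar>pp b x y * py a x y * Hx x y\<bar> \<le> 2 / Da
       \<and> y * \<bar>pp b x y * py a x y * Hx x y\<bar> \<le> 2 / Db"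
proof -
  have Da: "0 < Da" and Db: "0 < Db" using D_pos[OF y] by (auto simp: Da_def Db_def)
  have s: "y \<le> sinh y" "0 < sinh y" using sinh_ge_self[of y] y by auto
  define w where "w = y * \<bar>sin x\<bar>"
  have w0: "0 \<le> w" using y by (simp add: w_def)
  have yHx: "y * \<bar>Hx x y\<bar> \<le> 2 * pi * \<bar>sin x\<bar>"
  proof -
    have "y * \<bar>Hx x y\<bar> = (2 * pi * \<bar>sin x\<bar>) * (y / sinh y)"
      unfolding Hx_def using s by (simp add: abs_divide abs_mult)
    also have "\<dots> \<le> (2 * pi * \<bar>sin x\<bar>) * 1" using s y by (intro mult_left_mono) auto
    finally show ?thesis by simp
  qed
  have P: "\<bar>py a x y\<bar> \<le> 1 / (pi * Da)" using py_abs[OF y] by (simp add: Da_def)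
  have "y * \<bar>pp b x y * py a x y * Hx x y\<bar> = \<bar>pp b x y\<bar> * \<bar>py a x y\<bar> * (y * \<bar>Hx x y\<bar>)"
    using y by (simp add: abs_mult)
  also have "\<dots> \<le> (y / (pi * Db)) * (1 / (pi * Da)) * (2 * pi * \<bar>sin x\<bar>)"
  proof (rule mult_mono)
    show "\<bar>pp b x y\<bar> * \<bar>py a x y\<bar> \<le> y / (pi * Db) * (1 / (pi * Da))"
      using P pp_abs[OF y, of b x] y Da Db by (intro mult_mono) (auto simp: Db_def)
  qed (use yHx y Da Db in auto)
  also have "\<dots> = 2 * w / (pi * (Da * Db))" by (simp add: w_def mult_ac)
  finally have X: "y * \<bar>pp b x y * py a x y * Hx x y\<bar> \<le> 2 * w / (pi * (Da * Db))" .
  have w1: "w \<le> 1 + y"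
  proof -
    have "y * \<bar>sin x\<bar> \<le> y * 1" using y abs_sin_le_one[of x] by (intro mult_left_mono) auto
    then show ?thesis unfolding w_def by linarith
  qed
  have w2: "2 * w \<le> Da"
  proof -
    have "\<bar>sin x\<bar> \<le> \<bar>x - a\<bar>" using cos_shift(2)[OF ca, of x] abs_sin_x_le_abs_x[of "x - a"] by simp
    then have "2 * w \<le> 2 * \<bar>x - a\<bar> * y" using y by (simp add: w_def mult.commute mult_left_mono)
    also have "\<dots> \<le> Da" using uy_le[of y x a] y by (simp add: Da_def)
    finally show ?thesis .
  qed
  have w3: "2 * w \<le> Db"
  proof -
    have "\<bar>sin x\<bar> \<le> \<bar>x - b\<bar>" using cos_shift(2)[OF cb, of x] abs_sin_x_le_abs_x[of "x - b"] by simp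
    then have "2 * w \<le> 2 * \<bar>x - b\<bar> * y" using y by (simp add: w_def mult.commute mult_left_mono)
    also have "\<dots> \<le> Db" using uy_le[of y x b] y by (simp add: Db_def)
    finally show ?thesis .
  qed
  have DD: "0 < Da * Db" using Da Db by simp
  have A1: "2 * w / (pi * (Da * Db)) \<le> 2 * (1 + y) / (Da * Db)"
  proof -
    have "2 * w / (pi * (Da * Db)) \<le> 2 * w / (Da * Db)"
    proof (rule divide_left_mono)
      have "1 * (Da * Db) \<le> pi * (Da * Db)" using DD pi_gt3 by (intro mult_right_mono) auto
      then show "Da * Db \<le> pi * (Da * Db)" by simp
      show "0 < pi * (Da * Db) * (Da * Db)" using DD by simp
    qed (use w0 in simp)
    also have "\<dots> \<le> 2 * (1 + y) / (Da * Db)" using w1 DD by (intro divide_right_mono) auto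
    finally show ?thesis .
  qed
  have A2: "2 * w / (pi * (Da * Db)) \<le> 2 / Db"
  proof -
    have "2 * w / (pi * (Da * Db)) \<le> Da / (pi * (Da * Db))" using w2 DD by (intro divide_right_mono) auto
    also have "\<dots> = (1 / pi) / Db" using Da by simp
    also have "\<dots> \<le> 2 / Db" using Db pi_gt3 by (intro divide_right_mono) (auto simp: divide_le_eq)
    finally show ?thesis .
  qed
  have A3: "2 * w / (pi * (Da * Db)) \<le> 2 / Da"
  proof -
    have "2 * w / (pi * (Da * Db)) \<le> Db / (pi * (Da * Db))" using w3 DD by (intro divide_right_mono) auto
    also have "\<dots> = (1 / pi) / Da" using Db by simp
    also have "\<dots> \<le> 2 / Da" using Da pi_gt3 by (intro divide_right_mono) (auto simp: divide_le_eq)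
    finally show ?thesis .
  qed
  show ?thesis using X A1 A2 A3 by linarith
qed

lemma piece4:
  fixes x y a b :: real
  assumes y: "0 < y" and ca: "cos a = 1" and cb: "cos b = 1"
  defines "Da \<equiv> (x - a)^2 + y^2" and "Db \<equiv> (x - b)^2 + y^2"
  shows "y * \<bar>pp b x y * px a x y * Hy x y\<bar> \<le> 2 * (1 + y) / (Da * Db)
       \<and> y * \<bar>pp b x y * px a x y * Hy x y\<bar> \<le> 2 / Da
       \<and> y * \<bar>pp b x y * px a x y * Hy x y\<bar> \<le> 2 / Db"
proof -
  have Da: "0 < Da" and Db: "0 < Db" using D_pos[OF y] by (auto simp: Da_def Db_def)
  have s: "0 < sinh y" using y by simp
  define w where "w = 2 * \<bar>x - a\<bar> * y"
  define V where "V = y^2 * \<bar>cos x * cosh y - 1\<bar> / (sinh y)^2"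
  have w0: "0 \<le> w" using y by (simp add: w_def)
  have V0: "0 \<le> V" by (simp add: V_def)
  have wD: "w \<le> Da" using uy_le[of y x a] y by (simp add: Da_def w_def)
  have V1: "V \<le> 2" using Q_le1[OF y, of x] s by (simp add: V_def divide_le_eq)
  have V2: "V \<le> Da" using Q_le2[OF y ca, of x] s by (simp add: V_def divide_le_eq Da_def mult.commute)
  have V3: "V \<le> Db" using Q_le2[OF y cb, of x] s by (simp add: V_def divide_le_eq Db_def mult.commute)
  have X: "y * \<bar>pp b x y * px a x y * Hy x y\<bar> = 2 * w * V / (pi * (Da^2 * Db))"
  proof -
    have h: "\<bar>Hy x y\<bar> = 2 * pi * \<bar>cos x * cosh y - 1\<bar> / (sinh y)^2"
      unfolding Hy_def abs_divide abs_mult by simp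
    have "y * \<bar>pp b x y * px a x y * Hy x y\<bar> = y * \<bar>pp b x y\<bar> * \<bar>px a x y\<bar> * \<bar>Hy x y\<bar>"
      by (simp add: abs_mult)
    also have "\<dots> = y * (y / (pi * Db)) * (2 * \<bar>x - a\<bar> * y / (pi * Da^2))
         * (2 * pi * \<bar>cos x * cosh y - 1\<bar> / (sinh y)^2)"
      unfolding h pp_abs[OF y] px_abs[OF y] Da_def Db_def by simp
    also have "\<dots> = 2 * w * V / (pi * (Da^2 * Db))"
      unfolding w_def V_def using s Da Db by (simp add: field_simps power2_eq_square)
    finally show ?thesis .
  qed
  have DD: "0 < Da^2 * Db" using Da Db by simp
  have A1: "2 * w * V / (pi * (Da^2 * Db)) \<le> 2 * (1 + y) / (Da * Db)"
  proof -
    have "2 * w * V \<le> 2 * Da * 2" using w0 V0 wD V1 by (intro mult_mono) auto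
    then have "2 * w * V / (pi * (Da^2 * Db)) \<le> 2 * Da * 2 / (pi * (Da^2 * Db))"
      using DD by (intro divide_right_mono) auto
    also have "\<dots> = (4 / pi) / (Da * Db)" using Da by (simp add: power2_eq_square)
    also have "\<dots> \<le> 2 * (1 + y) / (Da * Db)"
    proof (intro divide_right_mono)
      have "2 * 2 \<le> (2 * (1 + y)) * pi" by (rule mult_mono) (use y pi_gt3 in auto)
      then show "4 / pi \<le> 2 * (1 + y)" by (simp add: divide_le_eq)
    qed (use Da Db in auto)
    finally show ?thesis .
  qed
  have A2: "2 * w * V / (pi * (Da^2 * Db)) \<le> 2 / Db"
  proof -
    have "2 * w * V \<le> 2 * Da * Da" using w0 V0 wD V2 by (intro mult_mono) auto
    then have "2 * w * V / (pi * (Da^2 * Db)) \<le> 2 * Da * Da / (pi * (Da^2 * Db))"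
      using DD by (intro divide_right_mono) auto
    also have "\<dots> = (2 / pi) / Db" using Da by (simp add: power2_eq_square)
    also have "\<dots> \<le> 2 / Db" using Db pi_gt3 by (intro divide_right_mono) (auto simp: divide_le_eq)
    finally show ?thesis .
  qed
  have A3: "2 * w * V / (pi * (Da^2 * Db)) \<le> 2 / Da"
  proof -
    have "2 * w * V \<le> 2 * Da * Db" using w0 V0 wD V3 by (intro mult_mono) auto
    then have "2 * w * V / (pi * (Da^2 * Db)) \<le> 2 * Da * Db / (pi * (Da^2 * Db))"
      using DD by (intro divide_right_mono) auto
    also have "\<dots> = (2 / pi) / Da" using Da Db by (simp add: power2_eq_square)
    also have "\<dots> \<le> 2 / Da" using Da pi_gt3 by (intro divide_right_mono) (auto simp: divide_le_eq)
    finally show ?thesis .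
  qed
  show ?thesis using X A1 A2 A3 by simp
qed

lemma cancel4: assumes "0 \<le> (y::real)" shows "4 * C * (1 + y) / ((4 * (1 + y)) * D) = C / D"
proof -
  have nz: "4 * (1 + y) \<noteq> (0::real)" using assms by simp
  have "4 * C * (1 + y) / ((4 * (1 + y)) * D) = ((4 * (1 + y)) * C) / ((4 * (1 + y)) * D)"
    by (simp add: mult_ac)
  also have "\<dots> = C / D" using nz by (rule nonzero_mult_divide_mult_cancel_left)
  finally show ?thesis .
qed

lemma comb:
  fixes X C y Da Db :: real
  assumes X0: "0 \<le> X" and C0: "0 \<le> C" and y: "0 \<le> y"
    and Da: "0 < Da" and Db: "0 < Db"
    and ab: "Da < 1 \<Longrightarrow> 1 \<le> Db" "Db < 1 \<Longrightarrow> 1 \<le> Da"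
    and X1: "X \<le> C * (1 + y) / (Da * Db)" and X2: "X \<le> C / Da" and X3: "X \<le> C / Db"
  shows "X \<le> 4 * C * (1 + y) / ((1 + Da) * (1 + Db))"
proof -
  have P: "0 < (1 + Da) * (1 + Db)" using Da Db by simp
  consider "1 \<le> Da" "1 \<le> Db" | "Da < 1" | "Db < 1" by linarith
  then show ?thesis
  proof cases
    case 1
    have "(1 + Da) * (1 + Db) \<le> (2 * Da) * (2 * Db)" using 1 by (intro mult_mono) auto
    then have "(1 + Da) * (1 + Db) \<le> 4 * (Da * Db)" by (simp add: mult_ac)
    then have "4 * C * (1 + y) / (4 * (Da * Db)) \<le> 4 * C * (1 + y) / ((1 + Da) * (1 + Db))"
    proof (rule divide_left_mono)
      show "0 < 4 * (Da * Db) * ((1 + Da) * (1 + Db))" using Da Db P by (intro mult_pos_pos) auto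
    qed (use C0 y in auto)
    then show ?thesis using X1 by simp
  next
    case 2
    have D: "1 \<le> Db" using ab(1)[OF 2] .
    have "(1 + Da) * (1 + Db) \<le> 2 * (2 * Db)" using 2 D Da by (intro mult_mono) auto
    also have "\<dots> \<le> (4 * (1 + y)) * Db" using y Db by (simp add: algebra_simps)
    finally have "4 * C * (1 + y) / ((4 * (1 + y)) * Db) \<le> 4 * C * (1 + y) / ((1 + Da) * (1 + Db))"
      using C0 y P Db by (intro divide_left_mono) auto
    also have "4 * C * (1 + y) / ((4 * (1 + y)) * Db) = C / Db" using y by (rule cancel4)
    finally show ?thesis using X3 by simp
  next
    case 3
    have D: "1 \<le> Da" using ab(2)[OF 3] .
    have "(1 + Da) * (1 + Db) \<le> (2 * Da) * 2" using 3 D Db by (intro mult_mono) auto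
    also have "\<dots> \<le> (4 * (1 + y)) * Da" using y Da by (simp add: algebra_simps)
    finally have "4 * C * (1 + y) / ((4 * (1 + y)) * Da) \<le> 4 * C * (1 + y) / ((1 + Da) * (1 + Db))"
      using C0 y P Da by (intro divide_left_mono) auto
    also have "4 * C * (1 + y) / ((4 * (1 + y)) * Da) = C / Da" using y by (rule cancel4)
    finally show ?thesis using X2 by simp
  qed
qed

lemma D_sep:
  fixes x y a b :: real
  assumes ab: "2 \<le> \<bar>a - b\<bar>" and "(x - a)^2 + y^2 < 1"
  shows "1 \<le> (x - b)^2 + y^2"
proof -
  have "(x - a)^2 < 1" using assms(2) by (smt (verit) zero_le_power2)
  then have "\<bar>x - a\<bar> < 1" by (simp add: abs_square_less_1)
  then have "1 \<le> \<bar>x - b\<bar>" using ab by linarith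
  then have "1 \<le> (x - b)^2" by (metis abs_ge_self one_le_power power2_abs order_trans abs_ge_zero)
  then show ?thesis by (smt (verit) zero_le_power2)
qed

lemma abs6: "\<bar>- t1 + t2 - t3 + t4 + t5 - t6\<bar> \<le> \<bar>t1\<bar> + \<bar>t2\<bar> + \<bar>t3\<bar> + \<bar>t4\<bar> + \<bar>t5\<bar> + \<bar>(t6::real)\<bar>"
  by arith

lemma JJ_bound:
  fixes x y a b :: real
  assumes y: "0 < y" and ca: "cos a = 1" and cb: "cos b = 1" and ab: "2 \<le> \<bar>a - b\<bar>"
  defines "Da \<equiv> (x - a)^2 + y^2" and "Db \<equiv> (x - b)^2 + y^2"
  shows "y * \<bar>JJ a b x y\<bar> \<le> 48 * (1 + y) / ((1 + Da) * (1 + Db))"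
proof -
  have Da: "0 < Da" and Db: "0 < Db" using D_pos[OF y] by (auto simp: Da_def Db_def)
  have s1: "Da < 1 \<Longrightarrow> 1 \<le> Db" using D_sep[OF ab] by (simp add: Da_def Db_def)
  have s2: "Db < 1 \<Longrightarrow> 1 \<le> Da" using D_sep[of b a x y] ab by (simp add: Da_def Db_def abs_minus_commute)
  have DbDa: "Db * Da = Da * Db" by simp
  let ?B = "8 * (1 + y) / ((1 + Da) * (1 + Db))"
  have c: "\<And>X. 0 \<le> X \<Longrightarrow> X \<le> 2 * (1 + y) / (Da * Db) \<and> X \<le> 2 / Da \<and> X \<le> 2 / Db \<Longrightarrow> X \<le> ?B"
    using comb[of _ 2 y Da Db] Da Db s1 s2 y by auto
  have c': "\<And>X. 0 \<le> X \<Longrightarrow> X \<le> 2 * (1 + y) / (Db * Da) \<and> X \<le> 2 / Db \<and> X \<le> 2 / Da \<Longrightarrow> X \<le> ?B"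
    using c by (auto simp: mult.commute)
  have b1: "y * \<bar>HH x y * py a x y * px b x y\<bar> \<le> ?B"
    using piece1[OF y ca cb, of x] y by (intro c) (auto simp: Da_def Db_def)
  have b2: "y * \<bar>HH x y * py b x y * px a x y\<bar> \<le> ?B"
    using piece1[OF y cb ca, of x] y by (intro c') (auto simp: Da_def Db_def)
  have b3: "y * \<bar>pp b x y * py a x y * Hx x y\<bar> \<le> ?B"
    using piece3[OF y ca cb, of x] y by (intro c) (auto simp: Da_def Db_def)
  have b4: "y * \<bar>pp b x y * px a x y * Hy x y\<bar> \<le> ?B"
    using piece4[OF y ca cb, of x] y by (intro c) (auto simp: Da_def Db_def)
  have b5: "y * \<bar>pp a x y * py b x y * Hx x y\<bar> \<le> ?B"
    using piece3[OF y cb ca, of x] y by (intro c') (auto simp: Da_def Db_def)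
  have b6: "y * \<bar>pp a x y * px b x y * Hy x y\<bar> \<le> ?B"
    using piece4[OF y cb ca, of x] y by (intro c') (auto simp: Da_def Db_def)
  have "\<bar>JJ a b x y\<bar> \<le> \<bar>HH x y * py a x y * px b x y\<bar> + \<bar>HH x y * py b x y * px a x y\<bar>
      + \<bar>pp b x y * py a x y * Hx x y\<bar> + \<bar>pp b x y * px a x y * Hy x y\<bar>
      + \<bar>pp a x y * py b x y * Hx x y\<bar> + \<bar>pp a x y * px b x y * Hy x y\<bar>"
  proof -
    have e: "JJ a b x y = - (HH x y * py a x y * px b x y) + HH x y * py b x y * px a x y
      - pp b x y * py a x y * Hx x y + pp b x y * px a x y * Hy x y
      + pp a x y * py b x y * Hx x y - pp a x y * px b x y * Hy x y"
      unfolding JJ_def by (simp add: algebra_simps)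
    show ?thesis unfolding e by (rule abs6)
  qed
  then have "y * \<bar>JJ a b x y\<bar> \<le> y * \<bar>HH x y * py a x y * px b x y\<bar> + y * \<bar>HH x y * py b x y * px a x y\<bar>
      + y * \<bar>pp b x y * py a x y * Hx x y\<bar> + y * \<bar>pp b x y * px a x y * Hy x y\<bar>
      + y * \<bar>pp a x y * py b x y * Hx x y\<bar> + y * \<bar>pp a x y * px b x y * Hy x y\<bar>"
    using y by (simp add: distrib_left[symmetric] mult_left_mono)
  also have "\<dots> \<le> 6 * ?B" using b1 b2 b3 b4 b5 b6 by linarith
  also have "\<dots> = 48 * (1 + y) / ((1 + Da) * (1 + Db))" by simp
  finally show ?thesis .
qed

lemma integrable_prod_real:
  fixes f g :: "real \<Rightarrow> real"
  assumes f: "integrable lborel f" and g: "integrable lborel g"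
  shows "integrable lborel (\<lambda>z::real\<times>real. f (fst z) * g (snd z))"
proof -
  have fm[measurable]: "f \<in> borel_measurable borel" using f by auto
  have gm[measurable]: "g \<in> borel_measurable borel" using g by auto
  have F: "(\<integral>\<^sup>+x. ennreal (norm (f x)) \<partial>lborel) < \<infinity>" using f by (simp add: integrable_iff_bounded)
  have G: "(\<integral>\<^sup>+x. ennreal (norm (g x)) \<partial>lborel) < \<infinity>" using g by (simp add: integrable_iff_bounded)
  have "(\<integral>\<^sup>+z. ennreal (norm (f (fst z) * g (snd z))) \<partial>(lborel \<Otimes>\<^sub>M lborel))
      = (\<integral>\<^sup>+x. \<integral>\<^sup>+y. ennreal (norm (f (fst (x, y)) * g (snd (x, y)))) \<partial>lborel \<partial>lborel)"
    by (rule lborel.nn_integral_fst[symmetric]) measurable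
  also have "\<dots> = (\<integral>\<^sup>+x. ennreal (norm (f x)) * (\<integral>\<^sup>+y. ennreal (norm (g y)) \<partial>lborel) \<partial>lborel)"
    by (simp add: abs_mult ennreal_mult nn_integral_cmult)
  also have "\<dots> = (\<integral>\<^sup>+x. ennreal (norm (f x)) \<partial>lborel) * (\<integral>\<^sup>+y. ennreal (norm (g y)) \<partial>lborel)"
    by (rule nn_integral_multc) measurable
  also have "\<dots> < \<infinity>" using F G by (simp add: ennreal_mult_less_top)
  finally have fin: "(\<integral>\<^sup>+z. ennreal (norm (f (fst z) * g (snd z))) \<partial>(lborel \<Otimes>\<^sub>M lborel)) < \<infinity>" .
  have fl: "f \<in> borel_measurable lborel" "g \<in> borel_measurable lborel" using f g by auto
  have m: "(\<lambda>z::real\<times>real. f (fst z) * g (snd z)) \<in> borel_measurable (lborel \<Otimes>\<^sub>M lborel)"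
    by (intro borel_measurable_times measurable_compose[OF measurable_fst fl(1)]
        measurable_compose[OF measurable_snd fl(2)])
  have "integrable (lborel \<Otimes>\<^sub>M lborel) (\<lambda>z::real\<times>real. f (fst z) * g (snd z))"
    using m fin by (rule integrableI_bounded)
  then show ?thesis by (simp add: lborel_prod)
qed

definition g1 :: "real \<Rightarrow> real" where
  "g1 s = (if 0 \<le> s \<and> s \<le> 1 then 1 else if 1 < s then s powr (-3/2) else 0)"
definition g2 :: "real \<Rightarrow> real" where
  "g2 s = (if 0 < s \<and> s \<le> 1 then s powr (-1/2) else if 1 < s then s powr (-3/2) else 0)"

lemma int_tail: "integrable lborel (\<lambda>s::real. indicator {1..} s * s powr (-3/2))"
proof -
  have "(\<lambda>s::real. s powr (-3/2)) integrable_on {1..}"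
    using has_integral_powr_to_inf[of "-3/2" 1] unfolding integrable_on_def by auto
  then have "(\<lambda>s::real. s powr (-3/2)) absolutely_integrable_on {1..}"
    by (subst absolutely_integrable_on_iff_nonneg) auto
  then have "integrable lebesgue (\<lambda>s::real. indicator {1..} s *\<^sub>R s powr (-3/2))"
    unfolding set_integrable_def .
  then show ?thesis by (subst (asm) integrable_completion) auto
qed

lemma int_head: "integrable lborel (\<lambda>s::real. indicator {0..1} s * s powr (-1/2))"
proof -
  have "(\<lambda>s::real. s powr (-1/2)) integrable_on {0..1}"
    by (rule integrable_on_powr_from_0) auto
  then have "(\<lambda>s::real. s powr (-1/2)) absolutely_integrable_on {0..1}"
    by (subst absolutely_integrable_on_iff_nonneg) auto
  then have "integrable lebesgue (\<lambda>s::real. indicator {0..1} s *\<^sub>R s powr (-1/2))"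
    unfolding set_integrable_def .
  then show ?thesis by (subst (asm) integrable_completion) auto
qed

lemma int_box: "integrable lborel (indicator {0..1} :: real \<Rightarrow> real)"
  by (rule integrable_real_indicator) auto

lemma g1_int: "integrable lborel g1"
proof (rule Bochner_Integration.integrable_bound)
  show "integrable lborel (\<lambda>s::real. indicator {0..1} s + indicator {1..} s * s powr (-3/2))"
    using int_box int_tail by (rule Bochner_Integration.integrable_add)
  show "g1 \<in> borel_measurable lborel" unfolding g1_def by measurable
  show "AE x in lborel. norm (g1 x) \<le> norm (indicator {0..1} x + indicator {1..} x * x powr (-3/2))"
    by (intro AE_I2) (auto simp: g1_def indicator_def)
qed

lemma g2_int: "integrable lborel g2"
proof (rule Bochner_Integration.integrable_bound)
  show "integrable lborel (\<lambda>s::real. indicator {0..1} s * s powr (-1/2) + indicator {1..} s * s powr (-3/2))"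
    using int_head int_tail by (rule Bochner_Integration.integrable_add)
  show "g2 \<in> borel_measurable lborel" unfolding g2_def by measurable
  show "AE x in lborel. norm (g2 x) \<le> norm (indicator {0..1} x * x powr (-1/2) + indicator {1..} x * x powr (-3/2))"
    by (intro AE_I2) (auto simp: g2_def indicator_def)
qed

lemma refl_int: assumes "integrable lborel (f::real \<Rightarrow> real)"
  shows "integrable lborel (\<lambda>t. f t + f (- t))"
proof -
  have "integrable lborel (\<lambda>t. f (0 + (-1) * t))"
    using assms by (subst lborel_integrable_real_affine_iff) auto
  then show ?thesis using assms by (intro Bochner_Integration.integrable_add) auto
qed

lemma powr32: "0 < s \<Longrightarrow> s powr - (3 / 2) = 1 / (s * sqrt s)"
proof -
  assume s: "0 < s"
  have e: "(3/2::real) = 1 + 1/2" by simp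
  have "s powr (3/2) = s powr (1 + 1/2)" by (simp only: e)
  also have "\<dots> = s powr 1 * s powr (1/2)" by (rule powr_add)
  also have "\<dots> = s * sqrt s" using s by (simp add: powr_half_sqrt)
  finally show ?thesis using s by (simp add: powr_minus_divide)
qed

lemma powr12: "0 < s \<Longrightarrow> s powr - (1 / 2) = 1 / sqrt s"
proof -
  assume s: "0 < s"
  have "s powr - (1/2) = 1 / s powr (1/2)" by (simp add: powr_minus_divide)
  then show ?thesis using s by (simp add: powr_half_sqrt)
qed

lemma g1_ge1: "1 \<le> s \<Longrightarrow> g1 s = 1 / (s * sqrt s)"
  by (cases "s = 1") (auto simp: g1_def powr32)
lemma g1_le1: "0 \<le> s \<Longrightarrow> s \<le> 1 \<Longrightarrow> g1 s = 1"
  by (simp add: g1_def)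
lemma g2_ge1: "1 \<le> s \<Longrightarrow> g2 s = 1 / (s * sqrt s)"
  by (cases "s = 1") (auto simp: g2_def powr32 powr12)
lemma g2_le1: "0 < s \<Longrightarrow> s \<le> 1 \<Longrightarrow> g2 s = 1 / sqrt s"
  by (simp add: g2_def powr12)
lemma g1_nonneg: "0 \<le> g1 s" by (simp add: g1_def)
lemma g2_nonneg: "0 \<le> g2 s" by (simp add: g2_def)

lemma frac_le_frac: "0 < (B::real) \<Longrightarrow> 0 < D \<Longrightarrow> A * D \<le> C * B \<Longrightarrow> A / B \<le> C / D"
  by (simp add: divide_simps)

lemma key_ineq1:
  fixes X y :: real assumes X: "1 \<le> X" and y: "1 \<le> y"
  shows "y^2 * (X * (sqrt X * sqrt y)) \<le> (X^2 + y^2)^2"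
proof -
  have sxy: "sqrt X * sqrt y \<le> (X + y) / 2"
  proof -
    have "0 \<le> (sqrt X - sqrt y)^2" by simp
    then show ?thesis using X y by (simp add: power2_eq_square algebra_simps)
  qed
  have "y^2 * (X * (sqrt X * sqrt y)) \<le> y^2 * (X * ((X + y) / 2))"
    using sxy X by (intro mult_left_mono) auto
  also have "\<dots> \<le> (X^2 + y^2)^2"
  proof -
    have h: "0 \<le> y^2 * (y - X)^2" by simp
    have h2: "0 \<le> X^2 * X^2" by simp
    have h3: "0 \<le> X^2 * y^2" by simp
    have h4: "0 \<le> y^2 * y^2" by simp
    show ?thesis using h h2 h3 h4 by (simp add: power2_eq_square algebra_simps)
  qed
  finally show ?thesis .
qed

lemma key_ineq2:
  fixes X y :: real assumes X: "0 \<le> X" and y: "0 \<le> y"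
  shows "y^3 * X \<le> (X^2 + y^2)^2"
proof -
  have h: "0 \<le> y^2 * (y - X)^2" by simp
  have h2: "0 \<le> X^2 * X^2" by simp
  have h3: "0 \<le> X^2 * y^2" by simp
  have h4: "0 \<le> y^2 * y^2" by simp
  show ?thesis using h h2 h3 h4 by (simp add: power2_eq_square power3_eq_cube algebra_simps)
qed

lemma sqrt_le_self: assumes "1 \<le> (y::real)" shows "sqrt y \<le> y"
proof -
  have "sqrt y \<le> sqrt (y * y)" using assms by (intro real_sqrt_le_mono) auto
  also have "\<dots> = y" using assms by simp
  finally show ?thesis .
qed

lemma B1:
  fixes X y :: real assumes X: "0 \<le> X" and y: "0 < y"
  shows "(1 + y) / (1 + X^2 + y^2)^2 \<le> 2 * g1 X * g1 y"
proof -
  define r where "r = 1 + X^2 + y^2"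
  have r1: "1 \<le> r" and rX: "X^2 \<le> r" and ry: "y^2 \<le> r" by (auto simp: r_def)
  have r0: "0 < r" using r1 by simp
  have rr: "0 < r^2" using r0 by simp
  have r2: "r \<le> r^2" using r1 by (simp add: power2_eq_square)
  consider "X \<le> 1" "y \<le> 1" | "X \<le> 1" "1 \<le> y" | "1 \<le> X" "y \<le> 1" | "1 \<le> X" "1 \<le> y" by linarith
  then show ?thesis
  proof cases
    case 1
    have "1 + y \<le> 2 * r^2" using 1 r1 r2 by linarith
    then have "(1 + y) / r^2 \<le> 2" using rr by (simp add: divide_le_eq)
    then show ?thesis using 1 X y by (simp add: g1_le1 r_def)
  next
    case 2
    have sy: "sqrt y \<le> y" using 2(2) by (rule sqrt_le_self)  
    have "(1 + y) * (y * sqrt y) \<le> (2 * y) * (y * y)"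
      using 2 sy by (intro mult_mono) auto
    also have "\<dots> = 2 * (y^2 * y)" by (simp add: power2_eq_square)
    also have "\<dots> \<le> 2 * (y^2 * y^2)" using 2 by (intro mult_left_mono) (auto simp: power2_eq_square)
    also have "\<dots> \<le> 2 * (r * r)" using ry r0 by (intro mult_left_mono mult_mono) auto
    finally have "(1 + y) * (y * sqrt y) \<le> 2 * r^2" by (simp add: power2_eq_square)
    then have "(1 + y) / r^2 \<le> 2 / (y * sqrt y)" using 2 rr by (intro frac_le_frac) auto
    then show ?thesis using 2 X by (simp add: g1_le1 g1_ge1 r_def)
  next
    case 3
    have sx: "sqrt X \<le> X" using 3(1) by (rule sqrt_le_self)
    have "(1 + y) * (X * sqrt X) \<le> 2 * (X * X)"
      using 3 sx y by (intro mult_mono) auto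
    also have "\<dots> = 2 * X^2" by (simp add: power2_eq_square)
    also have "\<dots> \<le> 2 * r^2" using rX r2 by simp
    finally have "(1 + y) * (X * sqrt X) \<le> 2 * r^2" .
    then have "(1 + y) / r^2 \<le> 2 / (X * sqrt X)" using 3 rr by (intro frac_le_frac) auto
    then show ?thesis using 3 y by (simp add: g1_le1 g1_ge1 r_def)
  next
    case 4
    have "(1 + y) * ((X * sqrt X) * (y * sqrt y)) \<le> (2 * y) * ((X * sqrt X) * (y * sqrt y))"
      using 4 by (intro mult_right_mono) auto
    also have "\<dots> = 2 * (y^2 * (X * (sqrt X * sqrt y)))" by (simp add: power2_eq_square mult_ac)
    also have "\<dots> \<le> 2 * (X^2 + y^2)^2" using key_ineq1[OF 4] by simp
    also have "\<dots> \<le> 2 * r^2" unfolding r_def by (intro mult_left_mono power_mono) auto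
    finally have "(1 + y) / r^2 \<le> 2 / ((X * sqrt X) * (y * sqrt y))" using 4 rr by (intro frac_le_frac) auto
    then show ?thesis using 4 by (simp add: g1_ge1 mult_ac r_def)
  qed
qed

lemma B2:
  fixes X y :: real assumes X: "0 < X" and y: "1 \<le> y"
  shows "sqrt (y / X) * (1 + y) / (1 + X^2 + y^2)^2 \<le> 2 * g2 X * g1 y"
proof -
  define r where "r = 1 + X^2 + y^2"
  have r1: "1 \<le> r" and rX: "X^2 \<le> r" and ry: "y^2 \<le> r" by (auto simp: r_def)
  have r0: "0 < r" using r1 by simp
  have rr: "0 < r^2" using r0 by simp
  have sx0: "0 < sqrt X" using X by simp
  have syy: "sqrt y * sqrt y = y" using y by simp
  have e: "sqrt (y / X) * (1 + y) / r^2 = (sqrt y * (1 + y)) / (sqrt X * r^2)"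
    by (simp add: real_sqrt_divide)
  have y4: "(1 + y) * y^2 \<le> 2 * r^2"
  proof -
    have "(1 + y) * y^2 \<le> (2 * y) * y^2" using y by (intro mult_right_mono) auto
    also have "\<dots> = 2 * (y^2 * y)" by (simp add: power2_eq_square)
    also have "\<dots> \<le> 2 * (y^2 * y^2)" using y by (intro mult_left_mono) (auto simp: power2_eq_square)
    also have "\<dots> \<le> 2 * (r * r)" using ry r0 by (intro mult_left_mono mult_mono) auto
    finally show ?thesis by (simp add: power2_eq_square)
  qed
  consider "X \<le> 1" | "1 \<le> X" by linarith
  then show ?thesis
  proof cases
    case 1
    have "(sqrt y * (1 + y)) * (sqrt X * (y * sqrt y)) = sqrt X * ((1 + y) * y^2)"
      using syy by (simp add: power2_eq_square mult_ac)
    also have "\<dots> \<le> sqrt X * (2 * r^2)" using y4 sx0 by (intro mult_left_mono) auto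
    finally have F: "(sqrt y * (1 + y)) * (sqrt X * (y * sqrt y)) \<le> 2 * (sqrt X * r^2)" by (simp add: mult_ac)
    have "(sqrt y * (1 + y)) / (sqrt X * r^2) \<le> 2 / (sqrt X * (y * sqrt y))"
      by (rule frac_le_frac) (use F sx0 rr y in auto)
    then have "sqrt (y / X) * (1 + y) / r^2 \<le> 2 / (sqrt X * (y * sqrt y))" using e by simp
    then show ?thesis using 1 X y by (simp add: g2_le1 g1_ge1 r_def)
  next
    case 2
    have "(sqrt y * (1 + y)) * ((X * sqrt X) * (y * sqrt y)) = sqrt X * ((1 + y) * y^2 * X)"
      using syy by (simp add: power2_eq_square mult_ac)
    also have "\<dots> \<le> sqrt X * (2 * (y^3 * X))"
    proof (rule mult_left_mono)
      have "(1 + y) * y^2 * X \<le> (2 * y) * y^2 * X" using y X by (intro mult_right_mono) auto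
      then show "(1 + y) * y^2 * X \<le> 2 * (y^3 * X)" by (simp add: power2_eq_square power3_eq_cube mult_ac)
    qed (use sx0 in auto)
    also have "\<dots> \<le> sqrt X * (2 * r^2)"
    proof (rule mult_left_mono)
      have "y^3 * X \<le> (X^2 + y^2)^2" using key_ineq2[of X y] X y by simp
      also have "\<dots> \<le> r^2" unfolding r_def by (intro power_mono) auto
      finally show "2 * (y^3 * X) \<le> 2 * r^2" by simp
    qed (use sx0 in auto)
    finally have F: "(sqrt y * (1 + y)) * ((X * sqrt X) * (y * sqrt y)) \<le> 2 * (sqrt X * r^2)" by (simp add: mult_ac)
    have "(sqrt y * (1 + y)) / (sqrt X * r^2) \<le> 2 / ((X * sqrt X) * (y * sqrt y))"
      by (rule frac_le_frac) (use F sx0 rr y X in auto)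
    then have "sqrt (y / X) * (1 + y) / r^2 \<le> 2 / ((X * sqrt X) * (y * sqrt y))" using e by simp
    then show ?thesis using 2 X y by (simp add: g2_ge1 g1_ge1 r_def)
  qed
qed

lemma ln_le_4rt: assumes t: "0 \<le> (t::real)" shows "ln (1 + t) \<le> 4 * sqrt (sqrt t)"
proof -
  have p: "0 < 1 + t" using t by simp
  have "ln (1 + t) = 4 * ln (sqrt (sqrt (1 + t)))"
    using p by (simp add: ln_sqrt)
  also have "\<dots> \<le> 4 * (sqrt (sqrt (1 + t)) - 1)"
    using p by (intro mult_left_mono ln_le_minus_one) auto
  also have "\<dots> \<le> 4 * sqrt (sqrt t)"
  proof -
    have "sqrt (1 + t) \<le> 1 + sqrt t" using sqrt_add_le_add_sqrt[of 1 t] t by simp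
    then have "sqrt (sqrt (1 + t)) \<le> sqrt (1 + sqrt t)" by (rule real_sqrt_le_mono)
    also have "\<dots> \<le> 1 + sqrt (sqrt t)" using sqrt_add_le_add_sqrt[of 1 "sqrt t"] t by simp
    finally show ?thesis by simp
  qed
  finally show ?thesis .
qed

lemma Gq_eq:
  fixes x y y0 b :: real assumes y0: "0 < y0"
  shows "GG y0 x y / (y0 / (pi * (b^2 + y0^2)))
       = ln ((x^2 + (y + y0)^2) / (x^2 + (y - y0)^2)) * ((b^2 + y0^2) / (2 * y0))"
  using y0 pi_gt_zero by (simp add: GG_def field_simps)

lemma ratio_eq:
  fixes x y y0 :: real assumes "0 < x^2 + (y - y0)^2"
  shows "(x^2 + (y + y0)^2) / (x^2 + (y - y0)^2) = 1 + 4 * y * y0 / (x^2 + (y - y0)^2)"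
  using assms by (simp add: field_simps power2_eq_square)

lemma Gq_bound1:
  fixes x y y0 b :: real
  assumes y: "0 < y" and y0: "0 < y0" and yb: "\<bar>b\<bar> \<le> y0" and yy: "y \<le> y0 / 2"
  shows "0 \<le> GG y0 x y / (y0 / (pi * (b^2 + y0^2))) \<and> GG y0 x y / (y0 / (pi * (b^2 + y0^2))) \<le> 16 * y"
proof -
  define Dd where "Dd = x^2 + (y - y0)^2"
  have Dlow: "y0^2 / 4 \<le> Dd"
  proof -
    have "y0 / 2 \<le> y0 - y" using yy by simp
    then have "(y0 / 2)^2 \<le> (y0 - y)^2" using y0 by (intro power_mono) auto
    then show ?thesis unfolding Dd_def by (simp add: power2_eq_square algebra_simps) (smt (verit) zero_le_square)
  qed
  have D0: "0 < Dd" using Dlow y0 by (smt (verit) zero_less_power divide_pos_pos)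
  define t where "t = 4 * y * y0 / Dd"
  have t0: "0 \<le> t" using y y0 D0 by (simp add: t_def)
  have tle: "t \<le> 16 * y / y0"
  proof -
    have "t \<le> 4 * y * y0 / (y0^2 / 4)" unfolding t_def
      using Dlow y y0 D0 by (intro divide_left_mono) auto
    also have "\<dots> = 16 * y / y0" using y0 by (simp add: field_simps power2_eq_square)
    finally show ?thesis .
  qed
  have l0: "0 \<le> ln (1 + t)" using t0 by simp
  have l1: "ln (1 + t) \<le> 16 * y / y0" using ln_add_one_self_le_self[OF t0] tle by linarith
  have c0: "0 \<le> (b^2 + y0^2) / (2 * y0)" using y0 by simp
  have c1: "(b^2 + y0^2) / (2 * y0) \<le> y0"
  proof -
    have "b^2 \<le> y0^2" using yb by (metis abs_ge_zero power2_abs power_mono)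
    then show ?thesis using y0 by (simp add: divide_le_eq power2_eq_square)
  qed
  have e: "GG y0 x y / (y0 / (pi * (b^2 + y0^2))) = ln (1 + t) * ((b^2 + y0^2) / (2 * y0))"
    unfolding Gq_eq[OF y0] ratio_eq[OF D0[unfolded Dd_def]] t_def Dd_def ..
  have "ln (1 + t) * ((b^2 + y0^2) / (2 * y0)) \<le> (16 * y / y0) * y0"
    using l0 l1 c0 c1 by (intro mult_mono) auto
  also have "\<dots> = 16 * y" using y0 by simp
  finally have F: "ln (1 + t) * ((b^2 + y0^2) / (2 * y0)) \<le> 16 * y" .
  have nn: "0 \<le> ln (1 + t) * ((b^2 + y0^2) / (2 * y0))" by (rule mult_nonneg_nonneg[OF l0 c0])
  show ?thesis unfolding e using nn F by blast
qed

lemma Gq_bound2: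
  fixes x y y0 b :: real
  assumes y: "0 < y" and y0: "0 < y0" and yb: "\<bar>b\<bar> \<le> y0" and yy: "y0 / 2 < y" and x: "x \<noteq> 0"
  shows "0 \<le> GG y0 x y / (y0 / (pi * (b^2 + y0^2)))
       \<and> GG y0 x y / (y0 / (pi * (b^2 + y0^2))) \<le> 16 * y * sqrt (y / \<bar>x\<bar>)"
proof -
  define Dd where "Dd = x^2 + (y - y0)^2"
  have x2: "0 < x^2" using x by simp
  have Dlow: "x^2 \<le> Dd" by (simp add: Dd_def)
  have D0: "0 < Dd" using Dlow x2 by linarith
  define t where "t = 4 * y * y0 / Dd"
  have t0: "0 \<le> t" using y y0 D0 by (simp add: t_def)
  have tle: "t \<le> 8 * y^2 / x^2"
  proof -
    have "t \<le> 4 * y * y0 / x^2" unfolding t_def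
      using Dlow y y0 x2 D0 by (intro divide_left_mono) auto
    also have "\<dots> \<le> 8 * y^2 / x^2" using y y0 yy x2
      by (intro divide_right_mono) (auto simp: power2_eq_square)
    finally show ?thesis .
  qed
  have l0: "0 \<le> ln (1 + t)" using t0 by simp
  have "ln (1 + t) \<le> 4 * sqrt (sqrt t)" by (rule ln_le_4rt[OF t0])
  also have "\<dots> \<le> 4 * sqrt (sqrt (8 * y^2 / x^2))"
    using tle t0 by (intro mult_left_mono real_sqrt_le_mono) auto
  also have "sqrt (sqrt (8 * y^2 / x^2)) = sqrt (sqrt 8) * sqrt (y / \<bar>x\<bar>)"
  proof -
    have h: "sqrt (8 * y^2 / x^2) = sqrt 8 * (y / \<bar>x\<bar>)" using y
      by (simp add: real_sqrt_mult real_sqrt_divide)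
    show ?thesis unfolding h by (rule real_sqrt_mult)
  qed
  also have "4 * (sqrt (sqrt 8) * sqrt (y / \<bar>x\<bar>)) \<le> 4 * (2 * sqrt (y / \<bar>x\<bar>))"
  proof -
    have "sqrt 8 \<le> sqrt ((4::real)^2)" by (intro real_sqrt_le_mono) simp
    then have "sqrt 8 \<le> (4::real)" by simp
    then have "sqrt (sqrt 8) \<le> sqrt (4::real)" by (rule real_sqrt_le_mono)
    then have "sqrt (sqrt 8) \<le> (2::real)" by simp
    then show ?thesis using y by (intro mult_left_mono mult_right_mono) auto
  qed
  finally have l1: "ln (1 + t) \<le> 8 * sqrt (y / \<bar>x\<bar>)" by simp
  have c0: "0 \<le> (b^2 + y0^2) / (2 * y0)" using y0 by simp
  have c1: "(b^2 + y0^2) / (2 * y0) \<le> 2 * y"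
  proof -
    have "b^2 \<le> y0^2" using yb by (metis abs_ge_zero power2_abs power_mono)
    then have "(b^2 + y0^2) / (2 * y0) \<le> y0" using y0 by (simp add: divide_le_eq power2_eq_square)
    then show ?thesis using yy by linarith
  qed
  have e: "GG y0 x y / (y0 / (pi * (b^2 + y0^2))) = ln (1 + t) * ((b^2 + y0^2) / (2 * y0))"
    unfolding Gq_eq[OF y0] ratio_eq[OF D0[unfolded Dd_def]] t_def Dd_def ..
  have "ln (1 + t) * ((b^2 + y0^2) / (2 * y0)) \<le> (8 * sqrt (y / \<bar>x\<bar>)) * (2 * y)"
    using l0 l1 c0 c1 by (intro mult_mono) auto
  also have "\<dots> = 16 * y * sqrt (y / \<bar>x\<bar>)" by simp
  finally have F: "ln (1 + t) * ((b^2 + y0^2) / (2 * y0)) \<le> 16 * y * sqrt (y / \<bar>x\<bar>)" .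
  have nn: "0 \<le> ln (1 + t) * ((b^2 + y0^2) / (2 * y0))" by (rule mult_nonneg_nonneg[OF l0 c0])
  show ?thesis unfolding e using nn F by blast
qed

definition Phi :: "real \<Rightarrow> real" where "Phi x = g1 x + g1 (- x)"
definition Psi :: "real \<Rightarrow> real" where "Psi x = g2 x + g2 (- x)"

lemma Phi_ge: "g1 \<bar>x\<bar> \<le> Phi x"
  unfolding Phi_def using g1_nonneg[of x] g1_nonneg[of "-x"] by (cases "0 \<le> x") auto
lemma Psi_ge: "g2 \<bar>x\<bar> \<le> Psi x"
  unfolding Psi_def using g2_nonneg[of x] g2_nonneg[of "-x"] by (cases "0 \<le> x") auto
lemma Phi_nonneg: "0 \<le> Phi x" unfolding Phi_def using g1_nonneg[of x] g1_nonneg[of "-x"] by simp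
lemma Psi_nonneg: "0 \<le> Psi x" unfolding Psi_def using g2_nonneg[of x] g2_nonneg[of "-x"] by simp

lemma dom1:
  fixes x y J K :: real
  assumes y: "0 < y" and K: "0 \<le> K" and HJ: "y * \<bar>J\<bar> \<le> K * (1 + y) / (1 + x^2 + y^2)^2"
  shows "\<bar>2 * y * J\<bar> \<le> 4 * K * Phi x * g1 y"
proof -
  have "\<bar>2 * y * J\<bar> = 2 * (y * \<bar>J\<bar>)" using y by (simp add: abs_mult)
  also have "\<dots> \<le> 2 * (K * ((1 + y) / (1 + x^2 + y^2)^2))" using HJ by simp
  also have "\<dots> \<le> 2 * (K * (2 * g1 \<bar>x\<bar> * g1 y))"
    using B1[of "\<bar>x\<bar>" y] y K by (intro mult_left_mono) auto
  also have "\<dots> \<le> 2 * (K * (2 * Phi x * g1 y))"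
    using Phi_ge[of x] K g1_nonneg[of y] by (intro mult_left_mono mult_right_mono) auto
  finally show ?thesis by (simp add: mult_ac)
qed

lemma dom2:
  fixes x y y0 b J K :: real
  assumes y: "0 < y" and x: "x \<noteq> 0" and y0: "2 \<le> y0" and yb: "\<bar>b\<bar> \<le> y0" and K: "0 \<le> K"
    and HJ: "y * \<bar>J\<bar> \<le> K * (1 + y) / (1 + x^2 + y^2)^2"
  shows "\<bar>GG y0 x y / (y0 / (pi * (b^2 + y0^2))) * J\<bar> \<le> 32 * K * (Phi x + Psi x) * g1 y"
proof -
  let ?Q = "GG y0 x y / (y0 / (pi * (b^2 + y0^2)))"
  have y00: "0 < y0" using y0 by simp
  have PP: "Phi x \<le> Phi x + Psi x" "Psi x \<le> Phi x + Psi x" using Phi_nonneg Psi_nonneg by auto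
  have g1y: "0 \<le> g1 y" by (rule g1_nonneg)
  show ?thesis
  proof (cases "y \<le> y0 / 2")
    case True
    note G = Gq_bound1[OF y y00 yb True, of x]
    have Q0: "0 \<le> ?Q" using G by blast
    have "\<bar>?Q * J\<bar> = ?Q * \<bar>J\<bar>" by (simp only: abs_mult abs_of_nonneg[OF Q0])
    also have "\<dots> \<le> (16 * y) * \<bar>J\<bar>" using G by (intro mult_right_mono) auto
    also have "\<dots> = 16 * (y * \<bar>J\<bar>)" by simp
    also have "\<dots> \<le> 16 * (K * ((1 + y) / (1 + x^2 + y^2)^2))" using HJ by simp
    also have "\<dots> \<le> 16 * (K * (2 * g1 \<bar>x\<bar> * g1 y))"
      using B1[of "\<bar>x\<bar>" y] y K by (intro mult_left_mono) auto
    also have "\<dots> \<le> 16 * (K * (2 * (Phi x + Psi x) * g1 y))"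
      using Phi_ge[of x] PP K g1y by (intro mult_left_mono mult_right_mono) auto
    finally show ?thesis by (simp add: mult_ac)
  next
    case False
    then have yy: "y0 / 2 < y" by simp
    have y1: "1 \<le> y" using yy y0 by simp
    note G = Gq_bound2[OF y y00 yb yy x]
    have Q0: "0 \<le> ?Q" using G by blast
    have "\<bar>?Q * J\<bar> = ?Q * \<bar>J\<bar>" by (simp only: abs_mult abs_of_nonneg[OF Q0])
    also have "\<dots> \<le> (16 * y * sqrt (y / \<bar>x\<bar>)) * \<bar>J\<bar>" using G by (intro mult_right_mono) auto
    also have "\<dots> = 16 * sqrt (y / \<bar>x\<bar>) * (y * \<bar>J\<bar>)" by (simp add: mult_ac)
    also have "\<dots> \<le> 16 * sqrt (y / \<bar>x\<bar>) * (K * ((1 + y) / (1 + x^2 + y^2)^2))"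
      using HJ y by (intro mult_left_mono) auto
    also have "\<dots> = 16 * K * (sqrt (y / \<bar>x\<bar>) * (1 + y) / (1 + \<bar>x\<bar>^2 + y^2)^2)" by simp
    also have "\<dots> \<le> 16 * K * (2 * g2 \<bar>x\<bar> * g1 y)"
      using B2[of "\<bar>x\<bar>" y] x y1 K by (intro mult_left_mono) auto
    also have "\<dots> \<le> 16 * K * (2 * (Phi x + Psi x) * g1 y)"
      using Psi_ge[of x] PP K g1y by (intro mult_left_mono mult_right_mono) auto
    finally show ?thesis by (simp add: mult_ac)
  qed
qed

lemma rho_le:
  fixes x y a :: real
  shows "1 + x^2 + y^2 \<le> (2 + 2 * a^2) * (1 + ((x - a)^2 + y^2))"
proof -
  have eq: "(2 + 2 * a^2) * (1 + ((x - a)^2 + y^2)) - (1 + x^2 + y^2)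
      = 1 + y^2 + (x - 2 * a)^2 + 2 * a^2 * ((x - a)^2 + y^2)"
    by (simp add: algebra_simps power2_eq_square)
  have "0 \<le> 1 + y^2 + (x - 2 * a)^2 + 2 * a^2 * ((x - a)^2 + y^2)" by (intro add_nonneg_nonneg) auto
  then show ?thesis using eq by linarith
qed

lemma aux48:
  fixes r A B P Q y :: real
  assumes "48 * (1 + y) * (r * r) \<le> 48 * (1 + y) * ((A * P) * (B * Q))"
  shows "48 * (1 + y) * r^2 \<le> (48 * A * B * (1 + y)) * (P * Q)"
  using assms by (simp add: power2_eq_square mult_ac)

lemma JJ_bound2:
  fixes x y a b :: real
  assumes y: "0 < y" and ca: "cos a = 1" and cb: "cos b = 1" and ab: "2 \<le> \<bar>a - b\<bar>"
  shows "y * \<bar>JJ a b x y\<bar> \<le> (48 * (2 + 2 * a^2) * (2 + 2 * b^2)) * (1 + y) / (1 + x^2 + y^2)^2"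
proof -
  define r where "r = 1 + x^2 + y^2"
  have r0: "0 < r" by (simp add: r_def add_pos_nonneg)
  have ra: "r \<le> (2 + 2 * a^2) * (1 + ((x - a)^2 + y^2))" unfolding r_def by (rule rho_le)
  have rb: "r \<le> (2 + 2 * b^2) * (1 + ((x - b)^2 + y^2))" unfolding r_def by (rule rho_le)
  have pa: "0 < 1 + ((x - a)^2 + y^2)" by (simp add: add_pos_nonneg)
  have pb: "0 < 1 + ((x - b)^2 + y^2)" by (simp add: add_pos_nonneg)
  have F: "r * r \<le> ((2 + 2 * a^2) * (1 + ((x - a)^2 + y^2))) * ((2 + 2 * b^2) * (1 + ((x - b)^2 + y^2)))"
    using ra rb r0 by (intro mult_mono) auto
  have F2: "48 * (1 + y) * r^2 \<le> (48 * (2 + 2 * a^2) * (2 + 2 * b^2) * (1 + y))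
      * ((1 + ((x - a)^2 + y^2)) * (1 + ((x - b)^2 + y^2)))"
  proof -
    have "48 * (1 + y) * (r * r) \<le> 48 * (1 + y) * (((2 + 2 * a^2) * (1 + ((x - a)^2 + y^2))) * ((2 + 2 * b^2) * (1 + ((x - b)^2 + y^2))))"
      by (rule mult_left_mono[OF F]) (use y in simp)
    then show ?thesis by (rule aux48)
  qed
  have "48 * (1 + y) / ((1 + ((x - a)^2 + y^2)) * (1 + ((x - b)^2 + y^2)))
      \<le> (48 * (2 + 2 * a^2) * (2 + 2 * b^2)) * (1 + y) / r^2"
    by (rule frac_le_frac) (use pa pb r0 F2 in auto)
  then show ?thesis using JJ_bound[OF y ca cb ab, of x] by (simp add: r_def)
qed

lemma sinh_meas[measurable]: "(sinh :: real \<Rightarrow> real) \<in> borel_measurable borel"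
  by (intro borel_measurable_continuous_onI continuous_intros)
lemma cosh_meas[measurable]: "(cosh :: real \<Rightarrow> real) \<in> borel_measurable borel"
  by (intro borel_measurable_continuous_onI continuous_intros)

lemma upper_meas[measurable]: "upper_half \<in> sets (borel \<Otimes>\<^sub>M borel :: (real \<times> real) measure)"
proof -
  have "upper_half = (UNIV :: real set) \<times> {0<..}" by (auto simp: upper_half_def)
  moreover have "(UNIV :: real set) \<times> {0::real<..} \<in> sets (borel \<Otimes>\<^sub>M borel)"
    by (rule pair_measureI) auto
  ultimately show ?thesis by simp
qed

lemma JJ_meas[measurable]: "(\<lambda>z::real\<times>real. JJ a b (fst z) (snd z)) \<in> borel_measurable (borel \<Otimes>\<^sub>M borel)"
  unfolding JJ_def HH_def Hx_def Hy_def pp_def px_def py_def by measurable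

lemma GG_meas[measurable]: "(\<lambda>z::real\<times>real. GG y0 (fst z) (snd z)) \<in> borel_measurable (borel \<Otimes>\<^sub>M borel)"
  unfolding GG_def by measurable

lemma null_line: "AE z in (lborel :: (real \<times> real) measure). fst z \<noteq> 0"
proof -
  have "emeasure (lborel \<Otimes>\<^sub>M lborel) ({0::real} \<times> (UNIV :: real set)) = emeasure lborel {0::real} * emeasure lborel (UNIV :: real set)"
    by (intro lborel.emeasure_pair_measure_Times) auto
  then have "emeasure (lborel :: (real \<times> real) measure) ({0} \<times> UNIV) = 0"
    by (simp add: lborel_prod)
  moreover have "{0::real} \<times> (UNIV :: real set) \<in> sets (lborel :: (real \<times> real) measure)"
    unfolding lborel_prod[symmetric] by (intro pair_measureI) auto
  ultimately have "{0::real} \<times> (UNIV :: real set) \<in> null_sets lborel" by (auto simp: null_sets_def)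
  then show ?thesis by (rule AE_I') auto
qed

lemma lim_G:
  fixes x y b :: real assumes y: "0 < y"
  shows "((\<lambda>y0. GG y0 x y / ((1 / pi) * (y0 / (b^2 + y0^2)))) \<longlongrightarrow> 2 * y) at_top"
  unfolding GG_def using y by real_asymp

theorem lemma3p4:
  fixes m n :: int
  shows "(\<forall>\<^sub>F y0 in at_top.
            set_integrable lborel upper_half
              (\<lambda>z. GG y0 (fst z) (snd z) / pk n 0 y0 * jj m n (fst z) (snd z)))
         \<and> set_integrable lborel upper_half (\<lambda>z. 2 * snd z * jj m n (fst z) (snd z))
         \<and> ((\<lambda>y0. LINT z : upper_half | lborel.
                 GG y0 (fst z) (snd z) / pk n 0 y0 * jj m n (fst z) (snd z))
             \<longlongrightarrow> (LINT z : upper_half | lborel. 2 * snd z * jj m n (fst z) (snd z))) at_top"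
proof (cases "m = n")
  case True
  then have z: "\<And>x y. jj m n x y = 0" using jj_same by simp
  show ?thesis by (simp add: z set_integrable_def set_lebesgue_integral_def)
next
  case False
  define a where "a = 2 * pi * of_int m"
  define b where "b = 2 * pi * of_int n"
  have ca: "cos a = 1" unfolding a_def by (rule cos_int_2pin)
  have cb: "cos b = 1" unfolding b_def by (rule cos_int_2pin)
  have ab: "2 \<le> \<bar>a - b\<bar>"
  proof -
    have "1 \<le> \<bar>real_of_int m - real_of_int n\<bar>" using False
      by (metis of_int_diff of_int_abs of_int_1_le_iff zero_less_abs_iff int_one_le_iff_zero_less right_minus_eq)
    then have "2 * pi * 1 \<le> 2 * pi * \<bar>real_of_int m - real_of_int n\<bar>" by (intro mult_left_mono) auto
    moreover have "\<bar>a - b\<bar> = 2 * pi * \<bar>real_of_int m - real_of_int n\<bar>"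
      unfolding a_def b_def by (simp add: abs_mult right_diff_distrib[symmetric])
    ultimately show ?thesis using pi_gt3 by linarith
  qed
  define K where "K = 48 * (2 + 2 * a^2) * (2 + 2 * b^2)"
  have K0: "0 \<le> K" unfolding K_def by (intro mult_nonneg_nonneg) auto
  have HJ: "\<And>x y. 0 < y \<Longrightarrow> y * \<bar>JJ a b x y\<bar> \<le> K * (1 + y) / (1 + x^2 + y^2)^2"
    unfolding K_def by (rule JJ_bound2[OF _ ca cb ab])
  have jjJ: "\<And>x y. 0 < y \<Longrightarrow> jj m n x y = JJ a b x y"
    unfolding a_def b_def by (rule jj_eq) simp
  have pkq: "\<And>y0. pk n 0 y0 = y0 / (pi * (b^2 + y0^2))"
    by (simp add: pk_def b_def power2_eq_square)
  have pkq': "\<And>y0. pk n 0 y0 = (1 / pi) * (y0 / (b^2 + y0^2))"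
    by (simp add: pk_def b_def power2_eq_square)
  define s where "s y0 z = indicator upper_half z * (GG y0 (fst z) (snd z) / pk n 0 y0 * JJ a b (fst z) (snd z))" for y0 z
  define f where "f z = indicator upper_half z * (2 * snd z * JJ a b (fst z) (snd z))" for z
  define w where "w z = 32 * K * ((Phi (fst z) + Psi (fst z)) * g1 (snd z))" for z
  have eq1: "\<And>y0. (\<lambda>z. indicator upper_half z *\<^sub>R (GG y0 (fst z) (snd z) / pk n 0 y0 * jj m n (fst z) (snd z))) = s y0"
    by (auto simp: s_def upper_half_def jjJ indicator_def fun_eq_iff)
  have eq2: "(\<lambda>z. indicator upper_half z *\<^sub>R (2 * snd z * jj m n (fst z) (snd z))) = f"
    by (auto simp: f_def upper_half_def jjJ indicator_def fun_eq_iff)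
  have sets_eq: "sets (lborel :: (real \<times> real) measure) = sets (borel \<Otimes>\<^sub>M borel)"
    by (simp only: sets_lborel borel_prod)
  have BM: "borel_measurable (lborel :: (real \<times> real) measure) = borel_measurable (borel \<Otimes>\<^sub>M borel)"
    by (rule measurable_cong_sets[OF sets_eq refl])
  have ms: "s y0 \<in> borel_measurable lborel" for y0
  proof -
    have "s y0 \<in> borel_measurable (borel \<Otimes>\<^sub>M borel)" unfolding s_def by measurable
    then show ?thesis unfolding BM .
  qed
  have fm: "f \<in> borel_measurable lborel"
  proof -
    have "f \<in> borel_measurable (borel \<Otimes>\<^sub>M borel)" unfolding f_def by measurable
    then show ?thesis unfolding BM .
  qed
  have w0: "0 \<le> w z" for z
    unfolding w_def using K0 Phi_nonneg Psi_nonneg g1_nonneg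
    by (intro mult_nonneg_nonneg add_nonneg_nonneg) auto
  have wint: "integrable lborel w"
  proof -
    have "integrable lborel (\<lambda>t. Phi t + Psi t)"
      unfolding Phi_def Psi_def
      by (intro Bochner_Integration.integrable_add refl_int g1_int g2_int)
    then have "integrable lborel (\<lambda>z::real \<times> real. (Phi (fst z) + Psi (fst z)) * g1 (snd z))"
      by (intro integrable_prod_real g1_int)
    then show ?thesis unfolding w_def by (rule integrable_mult_right)
  qed
  have bound: "\<forall>\<^sub>F y0 in at_top. AE z in lborel. norm (s y0 z) \<le> w z"
  proof (rule eventually_at_top_linorderI[of "max 2 \<bar>b\<bar>"])
    fix y0 :: real assume y0: "max 2 \<bar>b\<bar> \<le> y0"
    show "AE z in lborel. norm (s y0 z) \<le> w z"
      using null_line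
    proof eventually_elim
      fix z :: "real \<times> real" assume x: "fst z \<noteq> 0"
      show "norm (s y0 z) \<le> w z"
      proof (cases "z \<in> upper_half")
        case True
        then have y: "0 < snd z" by (simp add: upper_half_def)
        have "norm (s y0 z) = \<bar>GG y0 (fst z) (snd z) / (y0 / (pi * (b^2 + y0^2))) * JJ a b (fst z) (snd z)\<bar>"
          using True by (simp add: s_def pkq)
        also have "\<dots> \<le> 32 * K * (Phi (fst z) + Psi (fst z)) * g1 (snd z)"
          using y0 by (intro dom2[OF y x _ _ K0 HJ[OF y]]) auto
        finally show ?thesis by (simp add: w_def mult_ac)
      next
        case False
        then show ?thesis using w0[of z] by (simp add: s_def)
      qed
    qed
  qed
  have lim: "AE z in lborel. ((\<lambda>y0. s y0 z) \<longlongrightarrow> f z) at_top"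
  proof (rule AE_I2)
    fix z :: "real \<times> real"
    show "((\<lambda>y0. s y0 z) \<longlongrightarrow> f z) at_top"
    proof (cases "z \<in> upper_half")
      case True
      then have y: "0 < snd z" by (simp add: upper_half_def)
      have "((\<lambda>y0. GG y0 (fst z) (snd z) / pk n 0 y0 * JJ a b (fst z) (snd z))
             \<longlongrightarrow> 2 * snd z * JJ a b (fst z) (snd z)) at_top"
        unfolding pkq' by (intro tendsto_mult_right lim_G y)
      then show ?thesis using True by (simp add: s_def f_def)
    next
      case False
      then show ?thesis by (simp add: s_def f_def)
    qed
  qed
  have I1: "((\<lambda>t. integral\<^sup>L lborel (s t)) \<longlongrightarrow> integral\<^sup>L lborel f) at_top"
    by (rule integral_dominated_convergence_at_top[OF fm ms wint lim bound])
  have I2: "integrable lborel f"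
    by (rule integrable_dominated_convergence_at_top[OF fm ms wint lim bound])
  have I3: "\<forall>\<^sub>F y0 in at_top. integrable lborel (s y0)"
    using bound
  proof eventually_elim
    case (elim y0)
    show ?case
      by (rule Bochner_Integration.integrable_bound[OF wint ms]) (use elim w0 in auto)
  qed
  show ?thesis
    unfolding set_integrable_def set_lebesgue_integral_def eq1 eq2
    using I1 I2 I3 by simp
qed

end
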